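(* Let $L_{n+1},\dots,L_{n+m}\ge 0$ be nonnegative random risks and let $E_{n+1},\dots,E_{n+m}$ be random variables with $E_{n+j}\ge 0$ a.s. and $\mathbb{E}[E_{n+j}L_{n+j}]\le 1$ for every $j\in\{1,\dots,m\}$. Fix $\alpha\in(0,1)$ and let $\hat\tau=\max\{\tau\in\{1,\dots,m\}:\sum_{j=1}^m\mathbf{1}\{E_{n+j}\ge m/(\alpha\tau)\}\ge\tau\}$ (with $\hat\tau=0$ if this set is empty), and set $\hat\psi_{n+j}=\mathbf{1}\{E_{n+j}\ge m/(\alpha\hat\tau)\}$ if $\hat\tau>0$ and $\hat\psi_{n+j}=0$ for all $j$ if $\hat\tau=0$ (this is the e-BH procedure at level $\alpha$). Then $$\mathbb{E}\Big[\frac{\sum_{j=1}^m L_{n+j}\hat\psi_{n+j}}{1\vee\sum_{j=1}^m\hat\psi_{n+j}}\Big]\le\alpha.$$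
   Context: The left-hand side is the selective deployment risk (SDR) of the decisions $\hat\psi_{n+1},\dots,\hat\psi_{n+m}$. *)

theory Defs
  imports "HOL-Probability.Probability"
begin

definition ebh_tau :: "real \<Rightarrow> nat \<Rightarrow> (nat \<Rightarrow> real) \<Rightarrow> nat" where
  "ebh_tau \<alpha> m e =
     (let S = {\<tau> \<in> {1..m}. card {j \<in> {1..m}. e j \<ge> real m / (\<alpha> * real \<tau>)} \<ge> \<tau>}
      in if S = {} then 0 else Max S)"

definition ebh_psi :: "real \<Rightarrow> nat \<Rightarrow> (nat \<Rightarrow> real) \<Rightarrow> nat \<Rightarrow> real" where
  "ebh_psi \<alpha> m e j =
     (let t = ebh_tau \<alpha> m e
      in if t > 0 \<and> e j \<ge> real m / (\<alpha> * real t) then 1 else 0)"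

end

theory Submission
  imports Defs
begin

lemma tau_props:
  assumes "ebh_tau \<alpha> m e > 0"
  shows "ebh_tau \<alpha> m e \<in> {1..m} \<and>
    card {j \<in> {1..m}. e j \<ge> real m / (\<alpha> * real (ebh_tau \<alpha> m e))} \<ge> ebh_tau \<alpha> m e"
proof -
  define S where "S = {\<tau> \<in> {1..m}. card {j \<in> {1..m}. e j \<ge> real m / (\<alpha> * real \<tau>)} \<ge> \<tau>}"
  have S: "ebh_tau \<alpha> m e = (if S = {} then 0 else Max S)"
    unfolding ebh_tau_def S_def Let_def by simp
  with assms have ne: "S \<noteq> {}" by (auto split: if_splits)
  have "finite S" unfolding S_def by auto
  with ne have "Max S \<in> S" by simp
  with S ne show ?thesis unfolding S_def by simp
qed

lemma pointwise:
  fixes e l :: "nat \<Rightarrow> real"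
  assumes l: "\<And>j. j \<in> {1..m} \<Longrightarrow> l j \<ge> 0" and a: "0 < \<alpha>"
  shows "(\<Sum>j\<in>{1..m}. l j * ebh_psi \<alpha> m e j) / max 1 (\<Sum>j\<in>{1..m}. ebh_psi \<alpha> m e j)
         \<le> \<alpha> / real m * (\<Sum>j\<in>{1..m}. max 0 (e j * l j))"
proof (cases "ebh_tau \<alpha> m e > 0")
  case False
  then have "\<And>j. ebh_psi \<alpha> m e j = 0" unfolding ebh_psi_def Let_def by auto
  moreover have "0 \<le> \<alpha> / real m * (\<Sum>j\<in>{1..m}. max 0 (e j * l j))"
    using a by (intro mult_nonneg_nonneg sum_nonneg) auto
  ultimately show ?thesis by simp
next
  case True
  define t where "t = ebh_tau \<alpha> m e"
  define A where "A = {j \<in> {1..m}. e j \<ge> real m / (\<alpha> * real t)}"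
  from tau_props[OF True] have t1: "t \<ge> 1" "t \<le> m" and cA: "card A \<ge> t"
    unfolding t_def A_def by auto
  have psi: "\<And>j. j \<in> {1..m} \<Longrightarrow> ebh_psi \<alpha> m e j = (if j \<in> A then 1 else 0)"
    unfolding ebh_psi_def Let_def A_def t_def[symmetric] using True t_def by auto
  have fA: "finite A" "A \<subseteq> {1..m}" unfolding A_def by auto
  have s1: "(\<Sum>j\<in>{1..m}. ebh_psi \<alpha> m e j) = real (card A)"
  proof -
    have "(\<Sum>j\<in>{1..m}. ebh_psi \<alpha> m e j) = (\<Sum>j\<in>{1..m}. if j \<in> A then 1 else 0)"
      using psi by (intro sum.cong) auto
    also have "\<dots> = real (card A)" using fA by (simp add: sum.If_cases Int_absorb1)
    finally show ?thesis .
  qed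
  have s2: "(\<Sum>j\<in>{1..m}. l j * ebh_psi \<alpha> m e j) = (\<Sum>j\<in>A. l j)"
  proof -
    have "(\<Sum>j\<in>{1..m}. l j * ebh_psi \<alpha> m e j) = (\<Sum>j\<in>{1..m}. if j \<in> A then l j else 0)"
      using psi by (intro sum.cong) auto
    also have "\<dots> = (\<Sum>j\<in>A. l j)" using fA by (simp add: sum.If_cases Int_absorb1)
    finally show ?thesis .
  qed
  have tpos: "real t > 0" using t1 by simp
  have mpos: "real m > 0" using t1 by simp
  have SA: "(\<Sum>j\<in>A. l j) \<ge> 0" using l fA by (intro sum_nonneg) auto
  have "(\<Sum>j\<in>A. l j) / max 1 (real (card A)) \<le> (\<Sum>j\<in>A. l j) / real t"
    using cA tpos SA by (intro divide_left_mono) auto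
  also have "\<dots> = (\<Sum>j\<in>A. l j / real t)" by (simp add: sum_divide_distrib)
  also have "\<dots> \<le> (\<Sum>j\<in>A. \<alpha> / real m * max 0 (e j * l j))"
  proof (rule sum_mono)
    fix j assume j: "j \<in> A"
    then have ej: "e j \<ge> real m / (\<alpha> * real t)" and lj: "l j \<ge> 0" using l fA unfolding A_def by auto
    have "1 \<le> e j * (\<alpha> * real t) / real m"
      using ej a tpos mpos by (simp add: field_simps)
    then have "l j \<le> l j * (e j * (\<alpha> * real t) / real m)"
      using lj mult_left_mono[of 1 "e j * (\<alpha> * real t) / real m" "l j"] by simp
    then have "l j / real t \<le> \<alpha> / real m * (e j * l j)"
      using tpos mpos by (simp add: field_simps)
    also have "\<dots> \<le> \<alpha> / real m * max 0 (e j * l j)"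
      using a mpos by (intro mult_left_mono) auto
    finally show "l j / real t \<le> \<alpha> / real m * max 0 (e j * l j)" .
  qed
  also have "\<dots> = \<alpha> / real m * (\<Sum>j\<in>A. max 0 (e j * l j))" by (simp add: sum_distrib_left)
  also have "\<dots> \<le> \<alpha> / real m * (\<Sum>j\<in>{1..m}. max 0 (e j * l j))"
    using a mpos fA by (intro mult_left_mono sum_mono2) auto
  finally show ?thesis using s1 s2 by simp
qed

theorem theorem3p2:
  fixes M :: "'a measure" and L E :: "nat \<Rightarrow> 'a \<Rightarrow> real" and m :: nat and \<alpha> :: real
  assumes "prob_space M"
    and "\<And>j. j \<in> {1..m} \<Longrightarrow> L j \<in> borel_measurable M"
    and "\<And>j. j \<in> {1..m} \<Longrightarrow> E j \<in> borel_measurable M"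
    and "\<And>j x. j \<in> {1..m} \<Longrightarrow> x \<in> space M \<Longrightarrow> L j x \<ge> 0"
    and "\<And>j. j \<in> {1..m} \<Longrightarrow> (AE x in M. E j x \<ge> 0)"
    and "\<And>j. j \<in> {1..m} \<Longrightarrow> (\<integral>\<^sup>+ x. ennreal (E j x * L j x) \<partial>M) \<le> 1"
    and "0 < \<alpha>" and "\<alpha> < 1"
  shows "(\<integral>\<^sup>+ x. ennreal ((\<Sum>j\<in>{1..m}. L j x * ebh_psi \<alpha> m (\<lambda>i. E i x) j)
                 / max 1 (\<Sum>j\<in>{1..m}. ebh_psi \<alpha> m (\<lambda>i. E i x) j)) \<partial>M) \<le> ennreal \<alpha>"
proof -
  have pw: "ennreal ((\<Sum>j\<in>{1..m}. L j x * ebh_psi \<alpha> m (\<lambda>i. E i x) j)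
                 / max 1 (\<Sum>j\<in>{1..m}. ebh_psi \<alpha> m (\<lambda>i. E i x) j))
        \<le> ennreal (\<alpha> / real m) * (\<Sum>j\<in>{1..m}. ennreal (E j x * L j x))" if x: "x \<in> space M" for x
  proof -
    have "ennreal ((\<Sum>j\<in>{1..m}. L j x * ebh_psi \<alpha> m (\<lambda>i. E i x) j)
                 / max 1 (\<Sum>j\<in>{1..m}. ebh_psi \<alpha> m (\<lambda>i. E i x) j))
          \<le> ennreal (\<alpha> / real m * (\<Sum>j\<in>{1..m}. max 0 (E j x * L j x)))"
      by (rule ennreal_leI, rule pointwise) (use assms(4)[OF _ x] assms(7) in auto)
    also have "\<dots> = ennreal (\<alpha> / real m) * ennreal (\<Sum>j\<in>{1..m}. max 0 (E j x * L j x))"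
      using assms(7) by (intro ennreal_mult sum_nonneg) auto
    also have "ennreal (\<Sum>j\<in>{1..m}. max 0 (E j x * L j x)) = (\<Sum>j\<in>{1..m}. ennreal (max 0 (E j x * L j x)))"
      by (rule sum_ennreal[symmetric]) auto
    also have "\<dots> = (\<Sum>j\<in>{1..m}. ennreal (E j x * L j x))"
      by (intro sum.cong refl) (simp add: max_def ennreal_neg)
    finally show ?thesis .
  qed
  have "(\<integral>\<^sup>+ x. ennreal ((\<Sum>j\<in>{1..m}. L j x * ebh_psi \<alpha> m (\<lambda>i. E i x) j)
                 / max 1 (\<Sum>j\<in>{1..m}. ebh_psi \<alpha> m (\<lambda>i. E i x) j)) \<partial>M)
      \<le> (\<integral>\<^sup>+ x. ennreal (\<alpha> / real m) * (\<Sum>j\<in>{1..m}. ennreal (E j x * L j x)) \<partial>M)"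
    by (rule nn_integral_mono) (rule pw)
  also have "\<dots> = ennreal (\<alpha> / real m) * (\<integral>\<^sup>+ x. (\<Sum>j\<in>{1..m}. ennreal (E j x * L j x)) \<partial>M)"
    using assms(2,3) by (intro nn_integral_cmult) auto
  also have "(\<integral>\<^sup>+ x. (\<Sum>j\<in>{1..m}. ennreal (E j x * L j x)) \<partial>M)
      = (\<Sum>j\<in>{1..m}. \<integral>\<^sup>+ x. ennreal (E j x * L j x) \<partial>M)"
    using assms(2,3) by (intro nn_integral_sum) auto
  also have "\<dots> \<le> (\<Sum>j\<in>{1..m}. 1)"
    using assms(6) by (intro sum_mono) auto
  also have "ennreal (\<alpha> / real m) * (\<Sum>j\<in>{1..m}. (1::ennreal)) \<le> ennreal \<alpha>"
  proof (cases "m = 0")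
    case True then show ?thesis by simp
  next
    case False
    then have "ennreal (\<alpha> / real m) * (\<Sum>j\<in>{1..m}. (1::ennreal)) = ennreal (\<alpha> / real m * real m)"
      using assms(7) by (simp add: ennreal_of_nat_eq_real_of_nat ennreal_mult[symmetric])
    also have "\<dots> = ennreal \<alpha>" using False by simp
    finally show ?thesis by simp
  qed
  finally show ?thesis by (simp add: mult_left_mono)
qed

end
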